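(* Let $X$ be a polyhedral normed space and $f: X\to X$ nonexpansive and real analytic. Let $E\subseteq B_{X^*}$. If there exist $v,w\in S_E(f)$ such that $J(v-w)=E$, then $w+L_E\subseteq S_E(f)$.
   Context: A polyhedral normed space is a finite-dimensional real normed space whose closed unit ball has finitely many extreme points; $B_{X^*}$ is the closed unit ball of the dual space. Nonexpansive: $\|f(x)-f(y)\|\le\|x-y\|$ for all $x,y$. Real analytic: locally given by a convergent power series. The duality map is $J(x)=\{\phi\in B_{X^*}: \phi(x)=\|x\|\}$. For $E\subseteq B_{X^*}$: $S_E(f)=\{x\in X: \phi(f(x))=\phi(x)\text{ for all }\phi\in E\}$ and $L_E=\{x\in X: \phi(x)=\psi(x)\text{ for all }\phi,\psi\in E\}$. *)

theory Defs
  imports "HOL-Analysis.Analysis"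
begin

text \<open>The normed space X is modelled as the vector space real^'n (any finite
dimension n >= 1) equipped with an arbitrary norm N (not necessarily the
Euclidean one).\<close>

definition is_norm :: "('a::real_vector \<Rightarrow> real) \<Rightarrow> bool" where
  "is_norm N \<longleftrightarrow> (\<forall>x. N x = 0 \<longleftrightarrow> x = 0) \<and> (\<forall>c x. N (c *\<^sub>R x) = \<bar>c\<bar> * N x)
     \<and> (\<forall>x y. N (x + y) \<le> N x + N y)"

definition polyhedral_norm :: "('a::real_vector \<Rightarrow> real) \<Rightarrow> bool" where
  "polyhedral_norm N \<longleftrightarrow> is_norm N \<and> finite {x. x extreme_point_of {y. N y \<le> 1}}"

definition dual_ball :: "('a::real_vector \<Rightarrow> real) \<Rightarrow> ('a \<Rightarrow> real) set" where
  "dual_ball N = {\<phi>. linear \<phi> \<and> (\<forall>x. \<bar>\<phi> x\<bar> \<le> N x)}"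

definition nonexpansive :: "('a::real_vector \<Rightarrow> real) \<Rightarrow> ('a \<Rightarrow> 'a) \<Rightarrow> bool" where
  "nonexpansive N f \<longleftrightarrow> (\<forall>x y. N (f x - f y) \<le> N (x - y))"

definition real_analytic :: "(real^'n \<Rightarrow> real^'n) \<Rightarrow> bool" where
  "real_analytic f \<longleftrightarrow> (\<forall>x0. \<exists>r>0. \<exists>c :: ('n \<Rightarrow> nat) \<Rightarrow> real^'n.
     \<forall>y. dist y x0 < r \<longrightarrow>
       ((\<lambda>\<alpha>. (\<Prod>i\<in>UNIV. (y$i - x0$i) ^ \<alpha> i) *\<^sub>R c \<alpha>) has_sum f y) UNIV)"

definition duality_map :: "('a::real_vector \<Rightarrow> real) \<Rightarrow> 'a \<Rightarrow> ('a \<Rightarrow> real) set" where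
  "duality_map N x = {\<phi> \<in> dual_ball N. \<phi> x = N x}"

definition S_set :: "('a \<Rightarrow> real) set \<Rightarrow> ('a \<Rightarrow> 'a) \<Rightarrow> 'a set" where
  "S_set E f = {x. \<forall>\<phi>\<in>E. \<phi> (f x) = \<phi> x}"

definition L_set :: "('a \<Rightarrow> real) set \<Rightarrow> 'a set" where
  "L_set E = {x. \<forall>\<phi>\<in>E. \<forall>\<psi>\<in>E. \<phi> x = \<psi> x}"

end

theory Submission
  imports Defs "HOL-Complex_Analysis.Complex_Analysis"
begin


lemma nrm_basic:
  assumes "is_norm N"
  shows "N 0 = 0" "N (-x) = N x" "N x \<ge> 0" "N (x+y) \<le> N x + N y"
    "N (c *\<^sub>R x) = \<bar>c\<bar> * N x" "N (x - y) = N (y - x)"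
proof -
  have sc: "\<And>c x. N (c *\<^sub>R x) = \<bar>c\<bar> * N x" and tr: "\<And>x y. N (x + y) \<le> N x + N y"
    using assms unfolding is_norm_def by auto
  show "N 0 = 0" using sc[of 0 x] by simp
  show neg: "\<And>x. N (-x) = N x" using sc[of "-1"] by simp
  show "N (x+y) \<le> N x + N y" by (rule tr)
  show "N (c *\<^sub>R x) = \<bar>c\<bar> * N x" by (rule sc)
  have "N 0 \<le> N x + N (-x)" using tr[of x "-x"] by simp
  then show "N x \<ge> 0" using sc[of 0 x] neg[of x] by simp
  show "N (x - y) = N (y - x)" using neg[of "x - y"] by simp
qed

lemma nrm_eq0: "is_norm N \<Longrightarrow> N x = 0 \<longleftrightarrow> x = 0"
  unfolding is_norm_def by auto

lemma nrm_diff: "is_norm N \<Longrightarrow> N x - N y \<le> N (x - y)"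
  using nrm_basic(4)[of N "x - y" y] by simp

lemma nrm_sum: assumes "is_norm N" "finite A" shows "N (sum g A) \<le> (\<Sum>a\<in>A. N (g a))"
  using assms(2)
proof (induction A rule: finite_induct)
  case empty then show ?case using nrm_basic(1)[OF assms(1)] by simp
next
  case (insert a A)
  then show ?case using nrm_basic(4)[OF assms(1), of "g a" "sum g A"] by simp
qed

lemma nrm_upper:
  fixes N :: "'a::euclidean_space \<Rightarrow> real"
  assumes "is_norm N"
  shows "\<exists>C>0. \<forall>x. N x \<le> C * norm x"
proof (intro exI conjI allI)
  define C where "C = 1 + (\<Sum>b\<in>Basis. N b)"
  have pos: "(\<Sum>b\<in>Basis. N b) \<ge> 0" using nrm_basic(3)[OF assms] by (simp add: sum_nonneg)
  then show "C > 0" unfolding C_def by simp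
  fix x :: 'a
  have "N x = N (\<Sum>b\<in>Basis. (x \<bullet> b) *\<^sub>R b)" by (simp add: euclidean_representation)
  also have "\<dots> \<le> (\<Sum>b\<in>Basis. N ((x \<bullet> b) *\<^sub>R b))" by (rule nrm_sum[OF assms], simp)
  also have "\<dots> = (\<Sum>b\<in>Basis. \<bar>x \<bullet> b\<bar> * N b)" using nrm_basic(5)[OF assms] by simp
  also have "\<dots> \<le> (\<Sum>b\<in>Basis. norm x * N b)"
    by (rule sum_mono, rule mult_right_mono, simp add: Basis_le_norm, simp add: nrm_basic(3)[OF assms])
  also have "\<dots> = norm x * (\<Sum>b\<in>Basis. N b)" by (rule sum_distrib_left[symmetric])
  also have "\<dots> \<le> C * norm x" unfolding C_def by (simp add: algebra_simps)
  finally show "N x \<le> C * norm x" .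
qed

lemma nrm_cont:
  fixes N :: "'a::euclidean_space \<Rightarrow> real"
  assumes "is_norm N"
  shows "continuous_on S N"
proof -
  obtain C where C: "C > 0" "\<And>x. N x \<le> C * norm x" using nrm_upper[OF assms] by blast
  have "\<bar>N x - N y\<bar> \<le> C * dist x y" for x y
  proof -
    have "N x - N y \<le> N (x - y)" "N y - N x \<le> N (y - x)" using nrm_diff[OF assms] by auto
    moreover have "N (x - y) \<le> C * dist x y" "N (y - x) \<le> C * dist x y"
      using C(2)[of "x-y"] C(2)[of "y - x"] by (auto simp: dist_norm norm_minus_commute)
    ultimately show ?thesis by linarith
  qed
  then show ?thesis unfolding continuous_on_iff
    by (metis C(1) dist_real_def mult.commute pos_less_divide_eq le_less_trans zero_less_divide_iff)
qed

lemma nrm_lower: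
  fixes N :: "'a::euclidean_space \<Rightarrow> real"
  assumes "is_norm N"
  shows "\<exists>c>0. \<forall>x. c * norm x \<le> N x"
proof -
  obtain b :: 'a where b: "b \<in> Basis" using nonempty_Basis by blast
  have ne: "sphere (0::'a) 1 \<noteq> {}" using b by (auto intro!: exI[of _ b])
  obtain x0 where x0: "x0 \<in> sphere (0::'a) 1" "\<And>y. y \<in> sphere 0 1 \<Longrightarrow> N x0 \<le> N y"
    using continuous_attains_inf[OF compact_sphere ne nrm_cont[OF assms]] by blast
  have "x0 \<noteq> 0" using x0(1) by auto
  then have c: "N x0 > 0" using nrm_eq0[OF assms] nrm_basic(3)[OF assms, of x0] by force
  show ?thesis
  proof (intro exI conjI allI)
    show "N x0 > 0" by fact
    fix x :: 'a
    show "N x0 * norm x \<le> N x"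
    proof (cases "x = 0")
      case True then show ?thesis using nrm_basic(1)[OF assms] by simp
    next
      case False
      have "N x0 \<le> N (x /\<^sub>R norm x)" using x0(2)[of "x /\<^sub>R norm x"] False by simp
      also have "\<dots> = N x / norm x" using nrm_basic(5)[OF assms, of "inverse (norm x)" x] by (simp add: divide_inverse mult.commute)
      finally show ?thesis using False by (simp add: field_simps)
    qed
  qed
qed




lemma nrm_ball_compact_convex:
  fixes N :: "'a::euclidean_space \<Rightarrow> real"
  assumes "is_norm N"
  shows "compact {y. N y \<le> 1}" "convex {y. N y \<le> 1}"
proof -
  obtain c where c: "c > 0" "\<And>x. c * norm x \<le> N x" using nrm_lower[OF assms] by blast
  have "closed {y. N y \<le> 1}"
    by (rule closed_Collect_le[OF nrm_cont[OF assms] continuous_on_const])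
  moreover have "bounded {y. N y \<le> 1}"
    unfolding bounded_iff
  proof (intro exI ballI)
    fix x assume "x \<in> {y. N y \<le> 1}"
    then have "c * norm x \<le> 1" using c(2)[of x] by simp
    then show "norm x \<le> 1 / c" using c(1) by (simp add: field_simps)
  qed
  ultimately show "compact {y. N y \<le> 1}" by (simp add: compact_eq_bounded_closed)
  show "convex {y. N y \<le> 1}"
    unfolding convex_def
  proof (intro ballI allI impI)
    fix x y :: 'a and u v :: real
    assume xy: "x \<in> {y. N y \<le> 1}" "y \<in> {y. N y \<le> 1}" and uv: "0 \<le> u" "0 \<le> v" "u + v = 1"
    have "N (u *\<^sub>R x + v *\<^sub>R y) \<le> N (u *\<^sub>R x) + N (v *\<^sub>R y)" using nrm_basic(4)[OF assms] .
    also have "\<dots> = u * N x + v * N y" using nrm_basic(5)[OF assms] uv by simp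
    also have "\<dots> \<le> u * 1 + v * 1" using xy uv by (intro add_mono mult_left_mono) auto
    finally show "u *\<^sub>R x + v *\<^sub>R y \<in> {y. N y \<le> 1}" using uv by simp
  qed
qed

lemma polyhedral_support:
  fixes N :: "'a::euclidean_space \<Rightarrow> real"
  assumes "polyhedral_norm N"
  shows "\<exists>\<Psi>. finite \<Psi> \<and> \<Psi> \<subseteq> dual_ball N \<and> (\<forall>x. \<exists>\<psi>\<in>\<Psi>. \<psi> x = N x)"
proof -
  have nN: "is_norm N" using assms unfolding polyhedral_norm_def by auto
  define B where "B = {y. N y \<le> 1}"
  have "B = convex hull {x. x extreme_point_of B}"
    unfolding B_def by (rule Krein_Milman_Minkowski[OF nrm_ball_compact_convex[OF nN]])
  then have "polytope B" unfolding polytope_def using assms unfolding polyhedral_norm_def B_def by auto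
  then have "polyhedron B" by (rule polytope_imp_polyhedron)
  then obtain F where F: "finite F" "B = \<Inter>F" "\<And>h. h \<in> F \<Longrightarrow> \<exists>a b. a \<noteq> 0 \<and> h = {x. a \<bullet> x \<le> b}"
    unfolding polyhedron_def by blast
  define A :: "'a set \<Rightarrow> 'a" where "A h = (SOME a. \<exists>b. a \<noteq> 0 \<and> h = {x. a \<bullet> x \<le> b})" for h
  define Bh :: "'a set \<Rightarrow> real" where "Bh h = (SOME b. A h \<noteq> 0 \<and> h = {x. A h \<bullet> x \<le> b})" for h
  have AB: "A h \<noteq> 0 \<and> h = {x. A h \<bullet> x \<le> Bh h}" if "h \<in> F" for h
  proof -
    have "\<exists>b. A h \<noteq> 0 \<and> h = {x. A h \<bullet> x \<le> b}"
      unfolding A_def using someI_ex[OF F(3)[OF that]] .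
    then show ?thesis unfolding Bh_def by (rule someI_ex)
  qed
  have inB: "y \<in> B \<longleftrightarrow> (\<forall>h\<in>F. A h \<bullet> y \<le> Bh h)" for y
    using F(2) AB by auto
  have Bpos: "Bh h > 0" if "h \<in> F" for h
  proof -
    define r where "r = 1 / (N (A h) + 1)"
    have Nn: "N (A h) \<ge> 0" using nrm_basic(3)[OF nN] .
    have r: "r > 0" unfolding r_def using Nn by simp
    have "N (r *\<^sub>R A h) = r * N (A h)" using nrm_basic(5)[OF nN] r by simp
    also have "\<dots> \<le> 1" unfolding r_def using Nn by (simp add: field_simps)
    finally have "r *\<^sub>R A h \<in> B" unfolding B_def by simp
    then have "r * (A h \<bullet> A h) \<le> Bh h" using inB that by auto
    moreover have "A h \<bullet> A h > 0" using AB[OF that] by simp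
    ultimately show ?thesis using r by (smt (verit) mult_pos_pos)
  qed
  define psi :: "'a set \<Rightarrow> 'a \<Rightarrow> real" where "psi h = (\<lambda>y. (A h \<bullet> y) / Bh h)" for h
  have psi_le: "psi h y \<le> N y" if "h \<in> F" for h y
  proof (cases "y = 0")
    case True then show ?thesis unfolding psi_def using nrm_basic(1)[OF nN] by simp
  next
    case False
    then have Ny: "N y > 0" using nrm_eq0[OF nN] nrm_basic(3)[OF nN, of y] by force
    have "N (y /\<^sub>R N y) = 1" using nrm_basic(5)[OF nN, of "inverse (N y)" y] Ny by simp
    then have "y /\<^sub>R N y \<in> B" unfolding B_def by simp
    then have "A h \<bullet> (y /\<^sub>R N y) \<le> Bh h" using inB that by auto
    then have "(A h \<bullet> y) / N y \<le> Bh h" by (simp add: divide_inverse mult.commute)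
    then show ?thesis unfolding psi_def using Ny Bpos[OF that] by (simp add: field_simps)
  qed
  have psi_dual: "psi h \<in> dual_ball N" if "h \<in> F" for h
  proof -
    have "linear (psi h)" unfolding psi_def
      by (rule linearI) (simp_all add: inner_add_right add_divide_distrib)
    moreover have "\<bar>psi h y\<bar> \<le> N y" for y
    proof -
      have "psi h (-y) = - psi h y" unfolding psi_def by simp
      then show ?thesis using psi_le[OF that, of y] psi_le[OF that, of "-y"] nrm_basic(2)[OF nN, of y] by linarith
    qed
    ultimately show ?thesis unfolding dual_ball_def by auto
  qed
  have Fne: "F \<noteq> {}"
  proof
    assume "F = {}"
    then have "B = UNIV" using F(2) by simp
    then show False using compact_imp_bounded[OF nrm_ball_compact_convex(1)[OF nN]] not_bounded_UNIV
      unfolding B_def by metis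
  qed
  have attain: "\<exists>h\<in>F. psi h x = N x" for x
  proof (cases "x = 0")
    case True then show ?thesis using Fne nrm_basic(1)[OF nN] unfolding psi_def by auto
  next
    case False
    then have Nx: "N x > 0" using nrm_eq0[OF nN] nrm_basic(3)[OF nN, of x] by force
    define z where "z = x /\<^sub>R N x"
    have Nz: "N z = 1" unfolding z_def using nrm_basic(5)[OF nN, of "inverse (N x)" x] Nx by simp
    then have zB: "z \<in> B" unfolding B_def by simp
    have "\<exists>h\<in>F. A h \<bullet> z = Bh h"
    proof (rule ccontr)
      assume "\<not> ?thesis"
      then have lt: "A h \<bullet> z < Bh h" if "h \<in> F" for h using zB inB that by force
      have ev: "\<forall>\<^sub>F l in at_right (1::real). \<forall>h\<in>F. l * (A h \<bullet> z) < Bh h"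
      proof (rule eventually_ball_finite[OF F(1)], rule ballI)
        fix h assume h: "h \<in> F"
        have "((\<lambda>l. l * (A h \<bullet> z)) \<longlongrightarrow> 1 * (A h \<bullet> z)) (at_right 1)"
          by (intro tendsto_intros)
        then show "\<forall>\<^sub>F l in at_right 1. l * (A h \<bullet> z) < Bh h"
          using lt[OF h] by (simp add: order_tendstoD(2))
      qed
      then have "\<forall>\<^sub>F l in at_right (1::real). 1 < l \<and> (\<forall>h\<in>F. l * (A h \<bullet> z) < Bh h)"
        using eventually_at_right_less by (rule eventually_conj[rotated])
      then obtain l where l: "1 < l" "\<forall>h\<in>F. l * (A h \<bullet> z) < Bh h"
        using eventually_happens[of _ "at_right (1::real)"] by (auto simp: trivial_limit_at_right_real)
      then have "l *\<^sub>R z \<in> B" using inB by (simp add: less_imp_le)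
      then have "N (l *\<^sub>R z) \<le> 1" unfolding B_def by simp
      then show False using nrm_basic(5)[OF nN, of l z] Nz l(1) by simp
    qed
    then obtain h where h: "h \<in> F" "A h \<bullet> z = Bh h" by blast
    have "psi h x = N x * (A h \<bullet> z) / Bh h" unfolding psi_def z_def using Nx
      by (simp add: divide_inverse)
    then have "psi h x = N x" using h Bpos[OF h(1)] by simp
    then show ?thesis using h by blast
  qed
  show ?thesis
    by (rule exI[of _ "psi ` F"]) (use F(1) psi_dual attain in auto)
qed




lemma dual_lin: "\<phi> \<in> dual_ball N \<Longrightarrow> linear \<phi>"
  unfolding dual_ball_def by auto

lemma dual_le: "\<phi> \<in> dual_ball N \<Longrightarrow> \<phi> x \<le> N x"
  unfolding dual_ball_def by (metis (mono_tags, lifting) abs_le_D1 mem_Collect_eq)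

lemma localA:
  fixes N :: "'a::euclidean_space \<Rightarrow> real"
  assumes nN: "is_norm N" and Psi: "finite \<Psi>" "\<Psi> \<subseteq> dual_ball N" "\<forall>x. \<exists>\<psi>\<in>\<Psi>. \<psi> x = N x"
  shows "\<exists>\<delta>>0. \<forall>h. N h < \<delta> \<longrightarrow> (\<exists>\<psi>\<in>duality_map N u. \<psi> (u+h) = N (u+h))"
proof -
  define G where "G = insert 1 ((\<lambda>\<psi>. N u - \<psi> u) ` {\<psi>\<in>\<Psi>. \<psi> u < N u})"
  have Gf: "finite G" "G \<noteq> {}" unfolding G_def using Psi(1) by auto
  have Gp: "\<forall>g\<in>G. g > 0" unfolding G_def by auto
  define \<delta> where "\<delta> = Min G / 2"
  have dpos: "\<delta> > 0" unfolding \<delta>_def using Gf Gp by simp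
  show ?thesis
  proof (intro exI conjI allI impI)
    show "\<delta> > 0" by fact
    fix h assume h: "N h < \<delta>"
    obtain \<psi> where \<psi>: "\<psi> \<in> \<Psi>" "\<psi> (u+h) = N (u+h)" using Psi(3) by blast
    have dual: "\<psi> \<in> dual_ball N" using \<psi>(1) Psi(2) by auto
    have lin: "linear \<psi>" using dual_lin[OF dual] .
    have "\<psi> u = N u"
    proof (rule ccontr)
      assume ne: "\<psi> u \<noteq> N u"
      have "\<psi> u \<le> N u" using dual_le[OF dual] .
      with ne have "\<psi> u < N u" by simp
      then have "N u - \<psi> u \<in> G" unfolding G_def using \<psi>(1) by auto
      then have "Min G \<le> N u - \<psi> u" using Gf by simp
      moreover have "\<psi> (u+h) = \<psi> u + \<psi> h" using linear_add[OF lin] .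
      moreover have "\<psi> h \<le> N h" using dual_le[OF dual] .
      moreover have "N u - N h \<le> N (u + h)" using nrm_diff[OF nN, of "u+h" h] nrm_basic(4)[OF nN, of "u+h" "-h"]
        nrm_basic(2)[OF nN, of h] by simp
      ultimately show False using \<psi>(2) h unfolding \<delta>_def by linarith
    qed
    then have "\<psi> \<in> duality_map N u" unfolding duality_map_def using dual by simp
    then show "\<exists>\<psi>\<in>duality_map N u. \<psi> (u+h) = N (u+h)" using \<psi>(2) by blast
  qed
qed

lemma localA':
  fixes N :: "'a::euclidean_space \<Rightarrow> real"
  assumes pN: "polyhedral_norm N" and ne: "nonexpansive N f"
    and v: "v \<in> S_set E f" and w: "w \<in> S_set E f" and E: "duality_map N (v - w) = E"
  shows "\<exists>\<delta>>0. \<forall>l\<in>L_set E. N l < \<delta> \<longrightarrow>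
     (\<forall>\<phi>\<in>E. \<phi> (f (w + (1/2) *\<^sub>R (v - w) + l)) = \<phi> (w + (1/2) *\<^sub>R (v - w) + l))"
proof -
  have nN: "is_norm N" using pN unfolding polyhedral_norm_def by auto
  define u where "u = v - w"
  obtain \<Psi> where Psi: "finite \<Psi>" "\<Psi> \<subseteq> dual_ball N" "\<forall>x. \<exists>\<psi>\<in>\<Psi>. \<psi> x = N x"
    using polyhedral_support[OF pN] by blast
  obtain \<delta>0 where d0: "\<delta>0 > 0" "\<And>h. N h < \<delta>0 \<Longrightarrow> \<exists>\<psi>\<in>E. \<psi> (u+h) = N (u+h)"
    using localA[OF nN Psi, of u] E unfolding u_def by blast
  have Ed: "\<phi> \<in> dual_ball N" "\<phi> u = N u" if "\<phi> \<in> E" for \<phi>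
    using that E unfolding duality_map_def u_def by auto
  have key: "\<phi> (u + h) = N (u + h)" if h: "h \<in> L_set E" "N h < \<delta>0" and \<phi>: "\<phi> \<in> E" for h \<phi>
  proof -
    obtain \<psi> where \<psi>: "\<psi> \<in> E" "\<psi> (u+h) = N (u+h)" using d0(2)[OF h(2)] by blast
    have "\<phi> h = \<psi> h" using h(1) \<phi> \<psi>(1) unfolding L_set_def by auto
    moreover have "\<phi> u = \<psi> u" using Ed(2)[OF \<phi>] Ed(2)[OF \<psi>(1)] by simp
    ultimately show ?thesis using \<psi>(2) linear_add[OF dual_lin[OF Ed(1)[OF \<phi>]]]
      linear_add[OF dual_lin[OF Ed(1)[OF \<psi>(1)]]] by metis
  qed
  show ?thesis
  proof (intro exI conjI ballI impI)
    show "\<delta>0 / 2 > 0" using d0 by simp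
    fix l \<phi> assume l: "l \<in> L_set E" "N l < \<delta>0 / 2" and \<phi>: "\<phi> \<in> E"
    have lin: "linear \<phi>" using dual_lin[OF Ed(1)[OF \<phi>]] .
    define x where "x = w + (1/2) *\<^sub>R (v - w) + l"
    have L2: "(2::real) *\<^sub>R l \<in> L_set E" "(-2::real) *\<^sub>R l \<in> L_set E"
    proof -
      have "\<phi>' (c *\<^sub>R l) = \<psi>' (c *\<^sub>R l)" if "\<phi>' \<in> E" "\<psi>' \<in> E" for c :: real and \<phi>' \<psi>'
      proof -
        have "\<phi>' l = \<psi>' l" using l(1) that unfolding L_set_def by auto
        then show ?thesis using linear_scale[OF dual_lin[OF Ed(1)[OF that(1)]], of c l]
            linear_scale[OF dual_lin[OF Ed(1)[OF that(2)]], of c l] by simp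
      qed
      then show "(2::real) *\<^sub>R l \<in> L_set E" "(-2::real) *\<^sub>R l \<in> L_set E"
        unfolding L_set_def by (intro CollectI ballI, blast)+
    qed
    have N2: "N ((2::real) *\<^sub>R l) < \<delta>0" "N ((-2::real) *\<^sub>R l) < \<delta>0"
      using l(2) nrm_basic(5)[OF nN, of 2 l] nrm_basic(5)[OF nN, of "-2" l] by simp_all
    have hh: "\<And>a::'a. (1/2) *\<^sub>R a + (1/2) *\<^sub>R a = a" by (simp flip: scaleR_add_left)
    have xw: "x - w = (1/2) *\<^sub>R (u + 2 *\<^sub>R l)" unfolding x_def u_def by (simp add: algebra_simps hh)
    have vx: "v - x = (1/2) *\<^sub>R (u + (-2) *\<^sub>R l)" unfolding x_def u_def by (simp add: algebra_simps hh)
    have Nxw: "N (x - w) = \<phi> (x - w)"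
      unfolding xw using key[OF L2(1) N2(1) \<phi>] nrm_basic(5)[OF nN] linear_scale[OF lin] by simp
    have Nvx: "N (v - x) = \<phi> (v - x)"
      unfolding vx using key[OF L2(2) N2(2) \<phi>] nrm_basic(5)[OF nN] linear_scale[OF lin] by simp
    have fw: "\<phi> (f w) = \<phi> w" and fv: "\<phi> (f v) = \<phi> v" using v w \<phi> unfolding S_set_def by auto
    have n1: "N (f x - f w) \<le> N (x - w)" and n2: "N (f v - f x) \<le> N (v - x)"
      using ne unfolding nonexpansive_def by auto
    have "\<phi> (f x - f w) \<le> N (f x - f w)" "\<phi> (f v - f x) \<le> N (f v - f x)"
      using dual_le[OF Ed(1)[OF \<phi>]] by auto
    then have "\<phi> (f x) - \<phi> (f w) \<le> \<phi> x - \<phi> w" "\<phi> (f v) - \<phi> (f x) \<le> \<phi> v - \<phi> x"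
      using n1 n2 Nxw Nvx linear_diff[OF lin] by (metis order_trans)+
    then show "\<phi> (f x) = \<phi> x" using fw fv by linarith
  qed
qed




definition loc_ps :: "(real \<Rightarrow> real) \<Rightarrow> bool" where
  "loc_ps g \<longleftrightarrow> (\<forall>t0. \<exists>\<rho>>0. \<exists>a::nat\<Rightarrow>real.
      (\<forall>s. 0 \<le> s \<and> s < \<rho> \<longrightarrow> summable (\<lambda>k. \<bar>a k\<bar> * s ^ k)) \<and>
      (\<forall>t. \<bar>t - t0\<bar> < \<rho> \<longrightarrow> (\<lambda>k. a k * (t - t0) ^ k) sums g t))"

lemma ps_local_zero:
  fixes a :: "nat \<Rightarrow> real"
  assumes \<rho>: "\<rho> > 0" and sm: "\<And>s. 0 \<le> s \<Longrightarrow> s < \<rho> \<Longrightarrow> summable (\<lambda>k. \<bar>a k\<bar> * s ^ k)"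
    and rep: "\<And>t. \<bar>t - t0\<bar> < \<rho> \<Longrightarrow> (\<lambda>k. a k * (t - t0) ^ k) sums g t"
    and t': "\<bar>t' - t0\<bar> < \<rho>" and \<epsilon>: "\<epsilon> > 0" and z: "\<And>s. \<bar>s - t'\<bar> < \<epsilon> \<Longrightarrow> g s = 0"
    and t: "\<bar>t - t0\<bar> < \<rho>"
  shows "g t = 0"
proof -
  define c where "c k = complex_of_real (a k)" for k
  define p where "p z = (\<Sum>k. c k * z ^ k)" for z :: complex
  define h where "h z = p (z - of_real t0)" for z
  define S where "S = ball (complex_of_real t0) \<rho>"
  have hol: "h holomorphic_on S"
  proof -
    have "\<exists>f'. (h has_field_derivative f') (at z)" if zS: "z \<in> S" for z
    proof -
      define s where "s = (norm (z - of_real t0) + \<rho>) / 2"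
      have zs: "norm (z - of_real t0) < s" "s < \<rho>" "0 \<le> s"
      proof -
        have "norm (z - of_real t0) < \<rho>" using zS unfolding S_def by (simp add: dist_norm norm_minus_commute)
        moreover have "0 \<le> norm (z - of_real t0)" by simp
        ultimately show "norm (z - of_real t0) < s" "s < \<rho>" "0 \<le> s"
          unfolding s_def by (simp, simp, smt (verit) divide_nonneg_pos)
      qed
      have "summable (\<lambda>k. norm (c k * (complex_of_real s) ^ k))"
        using sm[OF zs(3) zs(2)] zs(3) by (simp add: c_def norm_mult norm_power)
      then have smc: "summable (\<lambda>k. c k * (complex_of_real s) ^ k)" by (rule summable_norm_cancel)
      have "(p has_field_derivative (\<Sum>n. diffs c n * (z - of_real t0) ^ n)) (at (z - of_real t0))"
        unfolding p_def by (rule termdiffs_strong[OF smc]) (use zs in simp)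
      then have "((\<lambda>y. p (y - of_real t0)) has_field_derivative (\<Sum>n. diffs c n * (z - of_real t0) ^ n) * 1) (at z)"
        by (rule DERIV_chain2) (auto intro!: derivative_eq_intros)
      then show ?thesis unfolding h_def by blast
    qed
    then show ?thesis unfolding S_def by (simp add: holomorphic_on_open)
  qed
  have hreal: "h (of_real s) = of_real (g s)" if "\<bar>s - t0\<bar> < \<rho>" for s
  proof -
    have "(\<lambda>k. of_real (a k * (s - t0) ^ k)) sums (complex_of_real (g s))"
      using sums_of_real[OF rep[OF that]] .
    then have "(\<lambda>k. c k * (of_real s - of_real t0) ^ k) sums (complex_of_real (g s))"
      by (simp add: c_def)
    then show ?thesis unfolding h_def p_def by (simp add: sums_iff)
  qed
  define e where "e = min \<epsilon> (\<rho> - \<bar>t' - t0\<bar>)"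
  have epos: "e > 0" unfolding e_def using \<epsilon> t' by simp
  define U where "U = complex_of_real ` {s. \<bar>s - t'\<bar> < e}"
  have US: "U \<subseteq> S"
  proof
    fix x assume "x \<in> U"
    then obtain s where s: "x = of_real s" "\<bar>s - t'\<bar> < e" unfolding U_def by auto
    then have "\<bar>s - t0\<bar> < \<rho>" unfolding e_def by linarith
    then show "x \<in> S" unfolding S_def s(1) by (simp add: dist_norm norm_minus_commute flip: of_real_diff)
  qed
  have hU: "h x = 0" if xU: "x \<in> U" for x
  proof -
    obtain s where s: "x = of_real s" "\<bar>s - t'\<bar> < e" using xU unfolding U_def by auto
    then have "\<bar>s - t0\<bar> < \<rho>" "\<bar>s - t'\<bar> < \<epsilon>" unfolding e_def by linarith+
    then show ?thesis using hreal z s(1) by simp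
  qed
  have lim: "complex_of_real t' islimpt U"
    unfolding islimpt_approachable
  proof (intro allI impI)
    fix d :: real assume d: "d > 0"
    define s where "s = t' + min d e / 2"
    have "\<bar>s - t'\<bar> < e" unfolding s_def using d epos by auto
    then have "of_real s \<in> U" unfolding U_def by blast
    moreover have "complex_of_real s \<noteq> of_real t'" unfolding s_def using d epos by simp
    moreover have "dist (complex_of_real s) (of_real t') < d"
      unfolding s_def dist_complex_def using d epos
      by (simp flip: of_real_diff) 
    ultimately show "\<exists>x'\<in>U. x' \<noteq> of_real t' \<and> dist x' (of_real t') < d" by blast
  qed
  have "h (of_real t) = 0"
  proof (rule analytic_continuation[OF hol _ _ US _ lim hU])
    show "open S" "connected S" unfolding S_def by auto
    show "complex_of_real t' \<in> S" "complex_of_real t \<in> S"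
      unfolding S_def using t t' by (simp_all add: dist_norm norm_minus_commute flip: of_real_diff)
  qed
  then show ?thesis using hreal[OF t] by simp
qed

lemma loc_ps_zero:
  assumes g: "loc_ps g" and e: "\<epsilon> > 0" "\<And>t. \<bar>t\<bar> < \<epsilon> \<Longrightarrow> g t = 0"
  shows "g t = 0"
proof -
  define Z where "Z = {t. \<exists>\<epsilon>>0. \<forall>s. \<bar>s - t\<bar> < \<epsilon> \<longrightarrow> g s = 0}"
  have "open Z" unfolding open_dist
  proof (intro ballI)
    fix t assume "t \<in> Z"
    then obtain d where d: "d > 0" "\<And>s. \<bar>s - t\<bar> < d \<Longrightarrow> g s = 0" unfolding Z_def by blast
    show "\<exists>e>0. \<forall>y. dist y t < e \<longrightarrow> y \<in> Z"
    proof (intro exI conjI allI impI)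
      show "d > 0" by fact
      fix y assume "dist y t < d"
      then have "\<forall>s. \<bar>s - y\<bar> < d - \<bar>y - t\<bar> \<longrightarrow> g s = 0" using d(2) unfolding dist_real_def by force
      then show "y \<in> Z" unfolding Z_def using \<open>dist y t < d\<close>
        by (intro CollectI exI[of _ "d - \<bar>y - t\<bar>"]) (auto simp: dist_real_def)
    qed
  qed
  moreover have "closed Z" unfolding closed_limpt
  proof (intro allI impI)
    fix t assume lp: "t islimpt Z"
    obtain \<rho> a where ra: "\<rho> > 0" "\<And>s. 0 \<le> s \<Longrightarrow> s < \<rho> \<Longrightarrow> summable (\<lambda>k. \<bar>a k\<bar> * s ^ k)"
      "\<And>t'. \<bar>t' - t\<bar> < \<rho> \<Longrightarrow> (\<lambda>k. a k * (t' - t) ^ k) sums g t'"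
      using g unfolding loc_ps_def by meson
    obtain t' where t': "t' \<in> Z" "\<bar>t' - t\<bar> < \<rho>"
      using lp ra(1) unfolding islimpt_approachable dist_real_def by blast
    obtain d where d: "d > 0" "\<And>s. \<bar>s - t'\<bar> < d \<Longrightarrow> g s = 0" using t'(1) unfolding Z_def by blast
    have "\<forall>s. \<bar>s - t\<bar> < \<rho> \<longrightarrow> g s = 0"
      using ps_local_zero[OF ra(1) ra(2) ra(3) t'(2) d(1) d(2)] by blast
    then show "t \<in> Z" unfolding Z_def using ra(1) by blast
  qed
  moreover have "0 \<in> Z" unfolding Z_def using e by auto
  ultimately have "Z = UNIV" using clopen[of Z] by blast
  then have "t \<in> Z" by simp
  then show ?thesis unfolding Z_def by force
qed




lemma finite_deg: "finite {\<alpha> :: 'n::finite \<Rightarrow> nat. (\<Sum>i\<in>UNIV. \<alpha> i) = k}"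
proof (rule finite_subset)
  show "{\<alpha> :: 'n \<Rightarrow> nat. (\<Sum>i\<in>UNIV. \<alpha> i) = k} \<subseteq> PiE UNIV (\<lambda>_. {..k})"
  proof
    fix \<alpha> :: "'n \<Rightarrow> nat" assume "\<alpha> \<in> {\<alpha>. (\<Sum>i\<in>UNIV. \<alpha> i) = k}"
    then have "\<alpha> i \<le> k" for i using member_le_sum[of i UNIV \<alpha>] by auto
    then show "\<alpha> \<in> PiE UNIV (\<lambda>_. {..k})" by (simp add: PiE_UNIV_domain)
  qed
  show "finite (PiE (UNIV::'n set) (\<lambda>_. {..k}))" by (rule finite_PiE) auto
qed

lemma regroup_deg:
  fixes F :: "('n::finite \<Rightarrow> nat) \<Rightarrow> real"
  assumes "(F has_sum S) UNIV"
  shows "(\<lambda>k. \<Sum>\<alpha>\<in>{\<alpha>. (\<Sum>i\<in>UNIV. \<alpha> i) = k}. F \<alpha>) sums S"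
proof -
  define D where "D k = {\<alpha> :: 'n \<Rightarrow> nat. (\<Sum>i\<in>UNIV. \<alpha> i) = k}" for k
  define hh where "hh \<alpha> = ((\<Sum>i\<in>UNIV. \<alpha> i), \<alpha>)" for \<alpha> :: "'n \<Rightarrow> nat"
  have img: "hh ` UNIV = Sigma UNIV D" unfolding hh_def D_def by auto
  have inj: "inj_on hh UNIV" unfolding hh_def inj_on_def by auto
  have "((\<lambda>(k,\<alpha>). F \<alpha>) has_sum S) (hh ` UNIV)"
    using has_sum_reindex[OF inj, of "\<lambda>(k,\<alpha>). F \<alpha>" S] assms unfolding hh_def by (simp add: o_def)
  then have "((\<lambda>(k,\<alpha>). F \<alpha>) has_sum S) (Sigma UNIV D)" using img by simp
  then have "((\<lambda>k. \<Sum>\<alpha>\<in>D k. F \<alpha>) has_sum S) UNIV"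
    by (rule has_sum_SigmaD) (auto intro: has_sum_finite simp: D_def finite_deg)
  then show ?thesis unfolding D_def by (rule has_sum_imp_sums)
qed




lemma loc_ps_sub_affine:
  assumes "loc_ps g"
  shows "loc_ps (\<lambda>t. g t - (c + d * t))"
  unfolding loc_ps_def
proof
  fix t0
  obtain \<rho> a where ra: "\<rho> > 0" "\<And>s. 0 \<le> s \<and> s < \<rho> \<longrightarrow> summable (\<lambda>k. \<bar>a k\<bar> * s ^ k)"
    "\<And>t. \<bar>t - t0\<bar> < \<rho> \<longrightarrow> (\<lambda>k. a k * (t - t0) ^ k) sums g t"
    using assms unfolding loc_ps_def by meson
  define b where "b k = (if k = 0 then c + d * t0 else if k = 1 then d else 0)" for k :: nat
  have bz: "\<And>k. k \<notin> {0,1} \<Longrightarrow> b k = 0" unfolding b_def by auto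
  show "\<exists>\<rho>>0. \<exists>a. (\<forall>s. 0 \<le> s \<and> s < \<rho> \<longrightarrow> summable (\<lambda>k. \<bar>a k\<bar> * s ^ k)) \<and>
      (\<forall>t. \<bar>t - t0\<bar> < \<rho> \<longrightarrow> (\<lambda>k. a k * (t - t0) ^ k) sums (g t - (c + d * t)))"
  proof (intro exI conjI allI impI)
    show "\<rho> > 0" by fact
    fix s :: real assume s: "0 \<le> s \<and> s < \<rho>"
    have s1: "summable (\<lambda>k. \<bar>b k\<bar> * s ^ k)" by (rule summable_finite[of "{0,1}"]) (auto simp: bz)
    have "summable (\<lambda>k. \<bar>a k\<bar> * s ^ k + \<bar>b k\<bar> * s ^ k)" by (rule summable_add[OF ra(2)[rule_format, OF s] s1])
    then show "summable (\<lambda>k. \<bar>a k - b k\<bar> * s ^ k)"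
    proof (rule summable_comparison_test'[where N=0])
      fix k :: nat
      have "\<bar>a k - b k\<bar> * s ^ k \<le> (\<bar>a k\<bar> + \<bar>b k\<bar>) * s ^ k"
        by (rule mult_right_mono) (use s in auto)
      then show "norm (\<bar>a k - b k\<bar> * s ^ k) \<le> \<bar>a k\<bar> * s ^ k + \<bar>b k\<bar> * s ^ k"
        using s by (simp add: algebra_simps)
    qed
  next
    fix t :: real assume t: "\<bar>t - t0\<bar> < \<rho>"
    have "(\<lambda>k. b k * (t - t0) ^ k) sums (\<Sum>k\<in>{0,1}. b k * (t - t0) ^ k)"
      by (rule sums_finite) (auto simp: bz)
    moreover have "(\<Sum>k\<in>{0,1::nat}. b k * (t - t0) ^ k) = c + d * t" unfolding b_def by (simp add: algebra_simps)
    ultimately have "(\<lambda>k. b k * (t - t0) ^ k) sums (c + d * t)" by simp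
    from sums_diff[OF ra(3)[rule_format, OF t] this]
    show "(\<lambda>k. (a k - b k) * (t - t0) ^ k) sums (g t - (c + d * t))" by (simp add: algebra_simps)
  qed
qed

lemma analytic_line:
  fixes f :: "real^'n \<Rightarrow> real^'n" and \<phi> :: "real^'n \<Rightarrow> real"
  assumes f: "real_analytic f" and lin: "linear \<phi>"
  shows "loc_ps (\<lambda>t. \<phi> (f (x0 + t *\<^sub>R m)))"
  unfolding loc_ps_def
proof
  fix t0
  define y0 where "y0 = x0 + t0 *\<^sub>R m"
  obtain r c where rc: "r > 0" "\<And>y. dist y y0 < r \<Longrightarrow>
     ((\<lambda>\<alpha>. (\<Prod>i\<in>UNIV. (y$i - y0$i) ^ \<alpha> i) *\<^sub>R c \<alpha>) has_sum f y) UNIV"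
    using f unfolding real_analytic_def by meson
  define \<rho> where "\<rho> = r / (norm m + 1)"
  have \<rho>: "\<rho> > 0" unfolding \<rho>_def using rc(1) norm_ge_zero[of m] by (intro divide_pos_pos) linarith+
  have bl: "bounded_linear \<phi>" using lin by (simp add: linear_conv_bounded_linear)
  define dc where "dc \<alpha> = \<phi> ((\<Prod>i\<in>UNIV. m$i ^ \<alpha> i) *\<^sub>R c \<alpha>)" for \<alpha>
  define deg where "deg \<alpha> = (\<Sum>i\<in>UNIV. \<alpha> i)" for \<alpha> :: "'n \<Rightarrow> nat"
  define a where "a k = (\<Sum>\<alpha>\<in>{\<alpha>. (\<Sum>i\<in>UNIV. \<alpha> i) = k}. dc \<alpha>)" for k
  have hs: "((\<lambda>\<alpha>. s ^ deg \<alpha> * dc \<alpha>) has_sum \<phi> (f (x0 + (t0 + s) *\<^sub>R m))) UNIV"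
    if s: "\<bar>s\<bar> < \<rho>" for s
  proof -
    define y where "y = y0 + s *\<^sub>R m"
    have "\<bar>s\<bar> * norm m \<le> \<bar>s\<bar> * (norm m + 1)" by (simp add: mult_left_mono)
    also have "\<dots> < r" using s rc(1) unfolding \<rho>_def by (simp add: field_simps add_pos_nonneg)
    finally have "dist y y0 < r" unfolding y_def by (simp add: dist_norm)
    from has_sum_bounded_linear[OF bl rc(2)[OF this]]
    have "((\<lambda>\<alpha>. \<phi> ((\<Prod>i\<in>UNIV. (y$i - y0$i) ^ \<alpha> i) *\<^sub>R c \<alpha>)) has_sum \<phi> (f y)) UNIV" .
    moreover have "\<phi> ((\<Prod>i\<in>UNIV. (y$i - y0$i) ^ \<alpha> i) *\<^sub>R c \<alpha>) = s ^ deg \<alpha> * dc \<alpha>" for \<alpha>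
    proof -
      have "(\<Prod>i\<in>UNIV. (y$i - y0$i) ^ \<alpha> i) = (\<Prod>i\<in>UNIV. s ^ \<alpha> i * m$i ^ \<alpha> i)"
        unfolding y_def by (simp add: power_mult_distrib)
      also have "\<dots> = s ^ deg \<alpha> * (\<Prod>i\<in>UNIV. m$i ^ \<alpha> i)"
        unfolding deg_def by (simp add: prod.distrib power_sum)
      finally show ?thesis unfolding dc_def
        by (simp add: linear_scale[OF lin])
    qed
    moreover have "y = x0 + (t0 + s) *\<^sub>R m" unfolding y_def y0_def by (simp add: algebra_simps)
    ultimately show ?thesis by simp
  qed
  have ak: "(\<Sum>\<alpha>\<in>{\<alpha>. (\<Sum>i\<in>UNIV. \<alpha> i) = k}. s ^ deg \<alpha> * dc \<alpha>) = a k * s ^ k" for s k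
  proof -
    have "(\<Sum>\<alpha>\<in>{\<alpha>. (\<Sum>i\<in>UNIV. \<alpha> i) = k}. s ^ deg \<alpha> * dc \<alpha>)
        = (\<Sum>\<alpha>\<in>{\<alpha>. (\<Sum>i\<in>UNIV. \<alpha> i) = k}. dc \<alpha> * s ^ k)"
      by (rule sum.cong) (auto simp: deg_def)
    then show ?thesis unfolding a_def by (simp add: sum_distrib_right)
  qed
  show "\<exists>\<rho>>0. \<exists>a. (\<forall>s. 0 \<le> s \<and> s < \<rho> \<longrightarrow> summable (\<lambda>k. \<bar>a k\<bar> * s ^ k)) \<and>
      (\<forall>t. \<bar>t - t0\<bar> < \<rho> \<longrightarrow> (\<lambda>k. a k * (t - t0) ^ k) sums \<phi> (f (x0 + t *\<^sub>R m)))"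
  proof (intro exI conjI allI impI)
    show "\<rho> > 0" by fact
    fix t assume t: "\<bar>t - t0\<bar> < \<rho>"
    from regroup_deg[OF hs[OF t]]
    show "(\<lambda>k. a k * (t - t0) ^ k) sums \<phi> (f (x0 + t *\<^sub>R m))" by (simp add: ak)
  next
    fix s :: real assume s: "0 \<le> s \<and> s < \<rho>"
    then have "\<bar>s\<bar> < \<rho>" by simp
    from hs[OF this] have "(\<lambda>\<alpha>. s ^ deg \<alpha> * dc \<alpha>) summable_on UNIV" by (auto simp: summable_on_def)
    then have "(\<lambda>\<alpha>. \<bar>s ^ deg \<alpha> * dc \<alpha>\<bar>) summable_on UNIV"
      using summable_on_iff_abs_summable_on_real[of "\<lambda>\<alpha>. s ^ deg \<alpha> * dc \<alpha>" UNIV] by simp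
    then obtain S' where "((\<lambda>\<alpha>. \<bar>s ^ deg \<alpha> * dc \<alpha>\<bar>) has_sum S') UNIV" by (auto simp: summable_on_def)
    from regroup_deg[OF this]
    have sm: "summable (\<lambda>k. \<Sum>\<alpha>\<in>{\<alpha>. (\<Sum>i\<in>UNIV. \<alpha> i) = k}. \<bar>s ^ deg \<alpha> * dc \<alpha>\<bar>)"
      by (rule sums_summable)
    show "summable (\<lambda>k. \<bar>a k\<bar> * s ^ k)"
    proof (rule summable_comparison_test'[OF sm, where N=0])
      fix k :: nat
      have "norm (\<bar>a k\<bar> * s ^ k) = \<bar>a k * s ^ k\<bar>" using s by (simp add: abs_mult)
      also have "\<dots> = \<bar>\<Sum>\<alpha>\<in>{\<alpha>. (\<Sum>i\<in>UNIV. \<alpha> i) = k}. s ^ deg \<alpha> * dc \<alpha>\<bar>" by (simp add: ak)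
      also have "\<dots> \<le> (\<Sum>\<alpha>\<in>{\<alpha>. (\<Sum>i\<in>UNIV. \<alpha> i) = k}. \<bar>s ^ deg \<alpha> * dc \<alpha>\<bar>)" by (rule sum_abs)
      finally show "norm (\<bar>a k\<bar> * s ^ k) \<le> (\<Sum>\<alpha>\<in>{\<alpha>. (\<Sum>i\<in>UNIV. \<alpha> i) = k}. \<bar>s ^ deg \<alpha> * dc \<alpha>\<bar>)" .
    qed
  qed
qed




lemma L_lin:
  assumes "E \<subseteq> dual_ball N" "a \<in> L_set E" "b \<in> L_set E"
  shows "c *\<^sub>R a + d *\<^sub>R b \<in> L_set E"
  unfolding L_set_def
proof (intro CollectI ballI)
  fix \<phi> \<psi> assume p: "\<phi> \<in> E" "\<psi> \<in> E"
  have l1: "linear \<phi>" "linear \<psi>" using p assms(1) dual_lin by blast+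
  have "\<phi> a = \<psi> a" "\<phi> b = \<psi> b" using assms(2,3) p unfolding L_set_def by auto
  then show "\<phi> (c *\<^sub>R a + d *\<^sub>R b) = \<psi> (c *\<^sub>R a + d *\<^sub>R b)"
    using l1 by (simp add: linear_add linear_scale)
qed

theorem lemma2p4:
  fixes N :: "real^'n \<Rightarrow> real" and f :: "real^'n \<Rightarrow> real^'n"
    and E :: "(real^'n \<Rightarrow> real) set" and v w :: "real^'n"
  assumes "polyhedral_norm N"
    and "nonexpansive N f"
    and "real_analytic f"
    and "E \<subseteq> dual_ball N"
    and "v \<in> S_set E f" and "w \<in> S_set E f"
    and "duality_map N (v - w) = E"
  shows "(\<lambda>l. w + l) ` L_set E \<subseteq> S_set E f"
proof
  have nN: "is_norm N" using assms(1) unfolding polyhedral_norm_def by auto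
  obtain \<delta> where d: "\<delta> > 0" "\<And>l. l \<in> L_set E \<Longrightarrow> N l < \<delta> \<Longrightarrow>
     (\<forall>\<phi>\<in>E. \<phi> (f (w + (1/2) *\<^sub>R (v - w) + l)) = \<phi> (w + (1/2) *\<^sub>R (v - w) + l))"
    using localA'[OF assms(1,2,5,6,7)] by blast
  define u where "u = v - w"
  have uL: "u \<in> L_set E" using assms(7) unfolding L_set_def duality_map_def u_def by auto
  fix x assume "x \<in> (\<lambda>l. w + l) ` L_set E"
  then obtain l where l: "l \<in> L_set E" "x = w + l" by blast
  define x0 where "x0 = w + (1/2) *\<^sub>R u"
  define m where "m = l - (1/2) *\<^sub>R u"
  have mL: "m \<in> L_set E" using L_lin[OF assms(4) l(1) uL, of 1 "-(1/2)"] unfolding m_def by simp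
  have tmL: "t *\<^sub>R m \<in> L_set E" for t using L_lin[OF assms(4) mL mL, of t 0] by simp
  show "x \<in> S_set E f" unfolding S_set_def
  proof (intro CollectI ballI)
    fix \<phi> assume \<phi>: "\<phi> \<in> E"
    have lin: "linear \<phi>" using \<phi> assms(4) dual_lin by blast
    define g where "g t = \<phi> (f (x0 + t *\<^sub>R m)) - (\<phi> x0 + \<phi> m * t)" for t
    have lg: "loc_ps g" unfolding g_def
      by (rule loc_ps_sub_affine[OF analytic_line[OF assms(3) lin]])
    define \<epsilon> where "\<epsilon> = \<delta> / (N m + 1)"
    have Nm: "N m \<ge> 0" using nrm_basic(3)[OF nN] .
    have e: "\<epsilon> > 0" unfolding \<epsilon>_def using d(1) Nm by simp
    have gz: "g t = 0" if t: "\<bar>t\<bar> < \<epsilon>" for t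
    proof -
      have "N (t *\<^sub>R m) = \<bar>t\<bar> * N m" using nrm_basic(5)[OF nN] .
      also have "\<dots> \<le> \<bar>t\<bar> * (N m + 1)" by (rule mult_left_mono) auto
      also have "\<dots> < \<delta>" using t Nm unfolding \<epsilon>_def by (simp add: field_simps)
      finally have "N (t *\<^sub>R m) < \<delta>" .
      from d(2)[OF tmL this] \<phi>
      have "\<phi> (f (x0 + t *\<^sub>R m)) = \<phi> (x0 + t *\<^sub>R m)" unfolding x0_def u_def by (simp add: add.assoc)
      then show ?thesis unfolding g_def using lin by (simp add: linear_add linear_scale)
    qed
    have "g 1 = 0" by (rule loc_ps_zero[OF lg e gz])
    moreover have "x0 + 1 *\<^sub>R m = x" unfolding x0_def m_def l(2) by simp
    moreover have "\<phi> (x0 + m) = \<phi> x0 + \<phi> m" using lin by (simp add: linear_add)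
    ultimately show "\<phi> (f x) = \<phi> x" unfolding g_def by simp
  qed
qed


end
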